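(* Let $K$ be a field of characteristic $\neq 2$, $n\ge1$, and let $\mathcal C$ be an EACP over $K$ with natural basis $\{h_1,\dots,h_n,r\}$ and structural constants $a_{ij},b_i$. Suppose $\sum_{j=1}^n a_{ij}a_{jk}=0$ and $b_i=0$ for all $i,k=1,\dots,n$. Then $\mathcal C$ is alternative, power associative, and satisfies the Jacobi identity $(xy)z+(yz)x+(zx)y=0$ and the Jordan identity $(xy)x^2=x(yx^2)$ for all $x,y,z\in\mathcal C$.
   Context: An EACP over a field $K$ (characteristic $\neq 2$) is a $K$-algebra $\mathcal C$ with a basis $\{h_1,\dots,h_n,r\}$ (called a natural basis) whose multiplication is determined by bilinearity from $$h_ir=rh_i=\tfrac12\Big(\sum_{j=1}^n a_{ij}h_j+b_ir\Big),\qquad h_ih_j=0\ (i,j=1,\dots,n),\qquad rr=0,$$ for some constants $a_{ij},b_i\in K$. Alternative means $(xx)y=x(xy)$ and $(yx)x=y(xx)$ for all $x,y$; power associative means $x^mx^k=x^{m+k}$ for all $x$ and all positive integers $m,k$. *)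

theory Defs
  imports Main
begin

text \<open>Natural basis indexed by option nat: Some i is h_i (1 \<le> i \<le> n), None is r.
  An element of the EACP is its coordinate function, supported on the basis indices.\<close>

definition eacp_basis :: "nat \<Rightarrow> nat option set" where
  "eacp_basis n = insert None (Some ` {1..n})"

definition eacp_carrier :: "nat \<Rightarrow> (nat option \<Rightarrow> 'a::zero) set" where
  "eacp_carrier n = {x. \<forall>w. w \<notin> eacp_basis n \<longrightarrow> x w = 0}"

text \<open>Coordinates of h_i r = r h_i = 1/2 (sum_j a_ij h_j + b_i r).\<close>
definition hr_coord :: "nat \<Rightarrow> (nat \<Rightarrow> nat \<Rightarrow> 'a::field) \<Rightarrow> (nat \<Rightarrow> 'a) \<Rightarrow> nat \<Rightarrow> nat option \<Rightarrow> 'a" where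
  "hr_coord n a b i w = (case w of
      Some j \<Rightarrow> (if j \<in> {1..n} then a i j / 2 else 0)
    | None \<Rightarrow> b i / 2)"

definition eacp_bprod :: "nat \<Rightarrow> (nat \<Rightarrow> nat \<Rightarrow> 'a::field) \<Rightarrow> (nat \<Rightarrow> 'a) \<Rightarrow> nat option \<Rightarrow> nat option \<Rightarrow> nat option \<Rightarrow> 'a" where
  "eacp_bprod n a b u v = (case (u, v) of
      (Some i, None) \<Rightarrow> hr_coord n a b i
    | (None, Some i) \<Rightarrow> hr_coord n a b i
    | _ \<Rightarrow> (\<lambda>w. 0))"

definition eacp_mult :: "nat \<Rightarrow> (nat \<Rightarrow> nat \<Rightarrow> 'a::field) \<Rightarrow> (nat \<Rightarrow> 'a) \<Rightarrow> (nat option \<Rightarrow> 'a) \<Rightarrow> (nat option \<Rightarrow> 'a) \<Rightarrow> (nat option \<Rightarrow> 'a)" where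
  "eacp_mult n a b x y = (\<lambda>w. \<Sum>u\<in>eacp_basis n. \<Sum>v\<in>eacp_basis n. x u * y v * eacp_bprod n a b u v w)"

fun eacp_pow :: "nat \<Rightarrow> (nat \<Rightarrow> nat \<Rightarrow> 'a::field) \<Rightarrow> (nat \<Rightarrow> 'a) \<Rightarrow> (nat option \<Rightarrow> 'a) \<Rightarrow> nat \<Rightarrow> (nat option \<Rightarrow> 'a)" where
  "eacp_pow n a b x 0 = (\<lambda>w. 0)"
| "eacp_pow n a b x (Suc 0) = x"
| "eacp_pow n a b x (Suc (Suc k)) = eacp_mult n a b (eacp_pow n a b x (Suc k)) x"

end

theory Submission
  imports Defs
begin

lemma sum_Some: "sum f (Some ` A) = sum (\<lambda>i. f (Some i)) A"
  by (simp add: sum.reindex)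

lemma mult_formula:
  "eacp_mult n a b x y w = (\<Sum>i=1..n. (x None * y (Some i) + x (Some i) * y None) * hr_coord n a b i w)"
proof -
  have nin: "None \<notin> Some ` {1..n}" by auto
  show ?thesis
    unfolding eacp_mult_def eacp_basis_def
    by (simp add: sum.insert[OF _ nin] sum_Some eacp_bprod_def sum.distrib
                  algebra_simps sum_distrib_left del: One_nat_def)
qed

lemma mult_None:
  assumes b0: "\<forall>i\<in>{1..n}. b i = 0"
  shows "eacp_mult n a b x y None = 0"
  unfolding mult_formula hr_coord_def using b0 by (simp add: sum.neutral)

lemma mult_Some:
  "eacp_mult n a b x y (Some k) = (if k \<in> {1..n} then
     (\<Sum>i=1..n. (x None * y (Some i) + x (Some i) * y None) * a i k / 2) else 0)"
  unfolding mult_formula hr_coord_def by (cases "k \<in> {1..n}") auto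

lemma mult_prod_l:
  assumes "p None = 0"
  shows "eacp_mult n a b p z w = z None * (\<Sum>i=1..n. p (Some i) * hr_coord n a b i w)"
  unfolding mult_formula using assms by (simp add: sum_distrib_left algebra_simps)

lemma mult_prod_r:
  assumes "p None = 0"
  shows "eacp_mult n a b z p w = z None * (\<Sum>i=1..n. p (Some i) * hr_coord n a b i w)"
  unfolding mult_formula using assms by (simp add: sum_distrib_left algebra_simps)

lemma key:
  fixes a :: "nat \<Rightarrow> nat \<Rightarrow> 'a::field"
  assumes char: "(2::'a) \<noteq> 0" and nil: "\<forall>i\<in>{1..n}. \<forall>k\<in>{1..n}. (\<Sum>j=1..n. a i j * a j k) = 0"
    and b0: "\<forall>i\<in>{1..n}. b i = 0"
  shows "(\<Sum>i=1..n. eacp_mult n a b x y (Some i) * hr_coord n a b i w) = 0"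
proof (cases w)
  case None
  then show ?thesis using b0 by (simp add: hr_coord_def)
next
  case (Some k)
  show ?thesis
  proof (cases "k \<in> {1..n}")
    case False
    then show ?thesis using Some by (auto simp: hr_coord_def)
  next
    case True
    define c where "c j = x None * y (Some j) + x (Some j) * y None" for j
    have "(\<Sum>i=1..n. eacp_mult n a b x y (Some i) * hr_coord n a b i w)
        = (\<Sum>i=1..n. (\<Sum>j=1..n. c j * a j i / 2) * (a i k / 2))"
      using True Some by (intro sum.cong) (auto simp: mult_Some hr_coord_def c_def)
    also have "\<dots> = (\<Sum>i=1..n. \<Sum>j=1..n. c j * (a j i * a i k) / 4)"
    proof (intro sum.cong refl)
      fix i
      have c4: "(4::'a) \<noteq> 0"
      proof
        assume "(4::'a) = 0"
        then have "(2::'a) * 2 = 0" by simp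
        then show False using char by (metis mult_eq_0_iff)
      qed
      show "(\<Sum>j=1..n. c j * a j i / 2) * (a i k / 2) = (\<Sum>j=1..n. c j * (a j i * a i k) / 4)"
        unfolding sum_distrib_right
        by (intro sum.cong refl) (simp add: field_simps c4 char)
    qed
    also have "\<dots> = (\<Sum>j=1..n. c j * (\<Sum>i=1..n. a j i * a i k) / 4)"
      by (subst sum.swap) (simp add: sum_distrib_left sum_divide_distrib)
    also have "\<dots> = 0" using nil True by simp
    finally show ?thesis .
  qed
qed

lemma triple0:
  fixes a :: "nat \<Rightarrow> nat \<Rightarrow> 'a::field"
  assumes char: "(2::'a) \<noteq> 0" and nil: "\<forall>i\<in>{1..n}. \<forall>k\<in>{1..n}. (\<Sum>j=1..n. a i j * a j k) = 0"
    and b0: "\<forall>i\<in>{1..n}. b i = 0"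
  shows "eacp_mult n a b (eacp_mult n a b x y) z = (\<lambda>w. 0)"
    "eacp_mult n a b z (eacp_mult n a b x y) = (\<lambda>w. 0)"
   apply (rule ext, subst mult_prod_l[where p="eacp_mult n a b x y", OF mult_None[OF b0]], subst key[OF char nil b0], simp)
  apply (rule ext, subst mult_prod_r[where p="eacp_mult n a b x y", OF mult_None[OF b0]], subst key[OF char nil b0], simp)
  done

lemma zero_l: "eacp_mult n a b (\<lambda>w. 0) z = (\<lambda>w. 0)"
  by (rule ext) (simp add: mult_formula)
lemma zero_r: "eacp_mult n a b z (\<lambda>w. 0) = (\<lambda>w. 0)"
  by (rule ext) (simp add: mult_formula)

theorem mainTheorem3:
  fixes n :: nat and a :: "nat \<Rightarrow> nat \<Rightarrow> 'a::field" and b :: "nat \<Rightarrow> 'a"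
  assumes char: "(2::'a) \<noteq> 0"
    and n: "n \<ge> 1"
    and nil: "\<forall>i\<in>{1..n}. \<forall>k\<in>{1..n}. (\<Sum>j=1..n. a i j * a j k) = 0"
    and b0: "\<forall>i\<in>{1..n}. b i = 0"
  shows "(\<forall>x\<in>eacp_carrier n. \<forall>y\<in>eacp_carrier n.
            eacp_mult n a b (eacp_mult n a b x x) y = eacp_mult n a b x (eacp_mult n a b x y)
          \<and> eacp_mult n a b (eacp_mult n a b y x) x = eacp_mult n a b y (eacp_mult n a b x x))
       \<and> (\<forall>x\<in>eacp_carrier n. \<forall>m\<ge>1. \<forall>k\<ge>1.
            eacp_mult n a b (eacp_pow n a b x m) (eacp_pow n a b x k) = eacp_pow n a b x (m + k))
       \<and> (\<forall>x\<in>eacp_carrier n. \<forall>y\<in>eacp_carrier n. \<forall>z\<in>eacp_carrier n.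
            (\<lambda>w. eacp_mult n a b (eacp_mult n a b x y) z w + eacp_mult n a b (eacp_mult n a b y z) x w
                 + eacp_mult n a b (eacp_mult n a b z x) y w) = (\<lambda>w. 0))
       \<and> (\<forall>x\<in>eacp_carrier n. \<forall>y\<in>eacp_carrier n.
            eacp_mult n a b (eacp_mult n a b x y) (eacp_mult n a b x x)
              = eacp_mult n a b x (eacp_mult n a b y (eacp_mult n a b x x)))"
proof -
  note T = triple0[OF char nil b0]
  have P2: "eacp_pow n a b x k = eacp_mult n a b (eacp_pow n a b x (k - 1)) x" if "k \<ge> 2" for x k
  proof -
    have "k = Suc (Suc (k - 2))" using that by simp
    then show ?thesis by (metis eacp_pow.simps(3) diff_Suc_1)
  qed
  have P3: "eacp_pow n a b x k = (\<lambda>w. 0)" if "k \<ge> 3" for x k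
  proof -
    have e1: "eacp_pow n a b x k = eacp_mult n a b (eacp_pow n a b x (k - 1)) x"
      using that by (intro P2) simp
    have e2: "eacp_pow n a b x (k - 1) = eacp_mult n a b (eacp_pow n a b x (k - 1 - 1)) x"
      using that by (intro P2) simp
    show ?thesis unfolding e1 e2 by (rule T(1))
  qed
  have pw: "eacp_mult n a b (eacp_pow n a b x m) (eacp_pow n a b x k) = eacp_pow n a b x (m + k)"
    if "m \<ge> 1" "k \<ge> 1" for x m k
  proof (cases "m = 1")
    case True
    show ?thesis
    proof (cases "k = 1")
      case True
      then show ?thesis using \<open>m = 1\<close> by (simp add: numeral_2_eq_2)
    next
      case False
      have e: "eacp_pow n a b x k = eacp_mult n a b (eacp_pow n a b x (k - 1)) x"
        using False that by (intro P2) simp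
      have "eacp_pow n a b x (m + k) = (\<lambda>w. 0)" using False that by (intro P3) simp
      then show ?thesis unfolding e using True T(2) by simp
    qed
  next
    case False
    have e: "eacp_pow n a b x m = eacp_mult n a b (eacp_pow n a b x (m - 1)) x"
      using False that by (intro P2) simp
    have "eacp_pow n a b x (m + k) = (\<lambda>w. 0)" using False that by (intro P3) simp
    then show ?thesis unfolding e using T(1) by simp
  qed
  show ?thesis
    using pw by (simp add: T zero_r)
qed
end
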